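(* Let $n\ge1$, $\alpha\in[0,n)$, and let $\phi(x)=\Phi(|x|)$ be a radial function on $\mathbb{R}^n$, where $\Phi:[0,\infty)\to[0,\infty)$ is decreasing, bounded and compactly supported. Then for every finite positive Borel measure $V$ on $\mathbb{R}^n$ and every fixed $\rho>0$, $$\lim_{t\to0^+}\Big\|\mathcal{M}^{\alpha}_{\phi}(V_t)(\cdot)-\sup_{r>0}\phi^{\alpha}_r(\cdot)\,V(\mathbb{R}^n)\Big\|_{L^{\frac{n}{n-\alpha},\infty}(\mathbb{R}^n\setminus B(0,\rho))}=0.$$
   Context: For $r>0$, $\phi^{\alpha}_r(x)=r^{-(n-\alpha)}\phi(x/r)$. For a positive measure $\mu$, $\mathcal{M}^{\alpha}_{\phi}(\mu)(x)=\sup_{r>0}\frac{1}{r^{n-\alpha}}\int_{\mathbb{R}^n}\phi\big(\frac{x-y}{r}\big)\,d\mu(y)$. For a measure $V$ and $t>0$, $V_t(E)=V(E/t)$ with $E/t=\{x/t:x\in E\}$. For a measurable set $E$ and $0<p<\infty$, $\|f\|_{L^{p,\infty}(E)}=\sup_{\lambda>0}\lambda\,|\{x\in E:|f(x)|>\lambda\}|^{1/p}$ (Lebesgue measure). *)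

theory Defs
  imports "HOL-Analysis.Analysis"
begin

definition dil_kernel :: "('a::euclidean_space \<Rightarrow> real) \<Rightarrow> real \<Rightarrow> real \<Rightarrow> 'a \<Rightarrow> real" where
  "dil_kernel \<phi> \<alpha> r x = r powr (-(real DIM('a) - \<alpha>)) * \<phi> ((1 / r) *\<^sub>R x)"

definition frac_max :: "real \<Rightarrow> ('a::euclidean_space \<Rightarrow> real) \<Rightarrow> 'a measure \<Rightarrow> 'a \<Rightarrow> ereal" where
  "frac_max \<alpha> \<phi> \<mu> x =
     (SUP r\<in>{0<..}. enn2ereal (ennreal (1 / r powr (real DIM('a) - \<alpha>)) *
        (\<integral>\<^sup>+ y. ennreal (\<phi> ((1 / r) *\<^sub>R (x - y))) \<partial>\<mu>)))"

text \<open>Dilation of a measure: V_t(E) = V(E/t), i.e. the push-forward under y \<mapsto> t y.\<close>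
definition dilate_measure :: "real \<Rightarrow> 'a::euclidean_space measure \<Rightarrow> 'a measure" where
  "dilate_measure t V = distr V borel (\<lambda>y. t *\<^sub>R y)"

definition enn_powr :: "ennreal \<Rightarrow> real \<Rightarrow> ennreal" where
  "enn_powr x p = (if x = top then top else ennreal (enn2real x powr p))"

definition weak_Lp_norm :: "real \<Rightarrow> 'a::euclidean_space set \<Rightarrow> ('a \<Rightarrow> ereal) \<Rightarrow> ennreal" where
  "weak_Lp_norm p E f =
     (SUP l\<in>{0<..}. ennreal l * enn_powr (emeasure lebesgue {x \<in> E. \<bar>f x\<bar> > ereal l}) (1 / p))"

end

theory Submission
  imports Defs
begin

lemma lebesgue_ball_le:
  fixes x :: "'a::euclidean_space" assumes R: "0 \<le> R"
  shows "emeasure lebesgue (ball x R) \<le> ennreal ((2*R)^DIM('a))"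
proof -
  have sub: "ball x R \<subseteq> cbox (x - R *\<^sub>R One) (x + R *\<^sub>R One)"
  proof
    fix y assume "y \<in> ball x R"
    then have d: "norm (y - x) < R" by (simp add: dist_norm norm_minus_commute)
    show "y \<in> cbox (x - R *\<^sub>R One) (x + R *\<^sub>R One)"
      unfolding mem_box(2)
    proof
      fix b :: 'a assume b: "b \<in> Basis"
      have "\<bar>(y - x) \<bullet> b\<bar> \<le> norm (y - x)" using b by (rule Basis_le_norm)
      with d b show "(x - R *\<^sub>R One) \<bullet> b \<le> y \<bullet> b \<and> y \<bullet> b \<le> (x + R *\<^sub>R One) \<bullet> b"
        by (auto simp: inner_simps abs_le_iff)
    qed
  qed
  have "emeasure lebesgue (ball x R) \<le> emeasure lebesgue (cbox (x - R *\<^sub>R One) (x + R *\<^sub>R One))"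
    by (rule emeasure_mono[OF sub]) simp
  also have "\<dots> = emeasure lborel (cbox (x - R *\<^sub>R One) (x + R *\<^sub>R One))" by simp
  also have "\<dots> = (\<Prod>b\<in>(Basis::'a set). ennreal (2*R))"
    using R by (simp add: emeasure_lborel_cbox_eq inner_simps algebra_simps ennreal_power power_mult_distrib)
  also have "\<dots> = ennreal (2*R) ^ DIM('a)" by simp
  also have "\<dots> = ennreal ((2*R)^DIM('a))" by (rule ennreal_power) (use R in simp)
  finally show ?thesis .
qed

lemma emeasure_UN_countable_le:
  assumes sets: "\<And>i. i \<in> I \<Longrightarrow> X i \<in> sets M" and I: "countable I"
  shows "emeasure M (\<Union>(X ` I)) \<le> (\<integral>\<^sup>+i. emeasure M (X i) \<partial>count_space I)"
proof -
  have le: "\<And>x. indicator (\<Union>(X ` I)) x \<le> (\<integral>\<^sup>+ i. indicator (X i) x \<partial>count_space I :: ennreal)"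
  proof -
    fix x
    show "indicator (\<Union>(X ` I)) x \<le> (\<integral>\<^sup>+ i. indicator (X i) x \<partial>count_space I :: ennreal)"
    proof (cases "x \<in> \<Union>(X ` I)")
      case True
      then obtain j where j: "x \<in> X j" "j \<in> I" by auto
      have "(1::ennreal) = (\<integral>\<^sup>+ i. indicator {j} i \<partial>count_space I)"
        using j by (simp add: nn_integral_count_space_indicator nn_integral_indicator_singleton)
      also have "\<dots> \<le> (\<integral>\<^sup>+ i. indicator (X i) x \<partial>count_space I)"
        by (rule nn_integral_mono) (use j in \<open>auto split: split_indicator\<close>)
      finally show ?thesis using True by simp
    qed simp
  qed
  note sets.countable_UN'[unfolded subset_eq, measurable]
  have "emeasure M (\<Union>(X ` I)) = (\<integral>\<^sup>+x. indicator (\<Union>(X ` I)) x \<partial>M)"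
    using sets I by (intro nn_integral_indicator[symmetric]) (auto intro: sets.countable_UN')
  also have "\<dots> \<le> (\<integral>\<^sup>+x. \<integral>\<^sup>+ i. indicator (X i) x \<partial>count_space I \<partial>M)"
    by (intro nn_integral_mono le)
  also have "\<dots> = (\<integral>\<^sup>+i. \<integral>\<^sup>+x. indicator (X i) x \<partial>M \<partial>count_space I)"
    using sets I by (intro nn_integral_count_space_nn_integral) auto
  also have "\<dots> = (\<integral>\<^sup>+i. emeasure M (X i) \<partial>count_space I)"
    using sets by (intro nn_integral_cong) auto
  finally show ?thesis .
qed

lemma maximal_weak:
  fixes g :: "'b \<Rightarrow> 'a::euclidean_space" and N :: "'b measure"
  assumes fin: "finite_measure N" and g: "g \<in> borel_measurable N" and T: "T \<in> sets N"
    and L: "0 < L" and b: "0 < \<beta>" "\<beta> \<le> real DIM('a)"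
  shows "\<exists>U\<in>sets lebesgue. {x. \<exists>r>0. ennreal (L * r powr \<beta>) < emeasure N {y\<in>space N. y \<in> T \<and> g y \<in> ball x r}} \<subseteq> U
          \<and> emeasure lebesgue U \<le> ennreal (10^DIM('a) * (measure N T / L) powr (real DIM('a) / \<beta>))"
proof -
  interpret finite_measure N by (rule fin)
  define P where "P x r = {y\<in>space N. y \<in> T \<and> g y \<in> ball x r}" for x r
  define S where "S = {x. \<exists>r>0. ennreal (L * r powr \<beta>) < emeasure N (P x r)}"
  define m where "m = measure N T"
  have m0: "0 \<le> m" by (simp add: m_def)
  have Pm: "P x r \<in> sets N" for x r
  proof -
    have "P x r = (g -` ball x r \<inter> space N) \<inter> T" by (auto simp: P_def)
    moreover have "g -` ball x r \<inter> space N \<in> sets N"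
      using g by (rule measurable_sets) simp
    ultimately show ?thesis using T by auto
  qed
  have PT: "emeasure N (P x r) \<le> ennreal m" for x r
  proof -
    have "emeasure N (P x r) \<le> emeasure N T" by (rule emeasure_mono) (auto simp: P_def T)
    also have "\<dots> = ennreal m" by (simp add: m_def emeasure_eq_measure)
    finally show ?thesis .
  qed
  show ?thesis
  proof (cases "m = 0")
    case True
    have "S = {}"
    proof -
      have "\<not> ennreal (L * r powr \<beta>) < emeasure N (P x r)" for x r
        using PT[of x r] True by (simp add: not_less)
      then show ?thesis by (auto simp: S_def)
    qed
    then show ?thesis unfolding S_def[symmetric] P_def[symmetric]
      by (intro bexI[of _ "{}"]) auto
  next
    case False
    with m0 have mpos: "0 < m" by simp
    define B where "B = (m / L) powr (1 / \<beta>)"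
    have "\<forall>x\<in>S. \<exists>r. 0 < r \<and> ennreal (L * r powr \<beta>) < emeasure N (P x r)"
      by (auto simp: S_def)
    then obtain rr where rr: "\<And>x. x \<in> S \<Longrightarrow> 0 < rr x \<and> ennreal (L * rr x powr \<beta>) < emeasure N (P x (rr x))"
      by metis
    have rrB: "rr x < B" if x: "x \<in> S" for x
    proof -
      have "ennreal (L * rr x powr \<beta>) < ennreal m" using rr[OF x, THEN conjunct2] PT[of x "rr x"] by (rule order_less_le_trans)
      then have "L * rr x powr \<beta> < m" using L by (subst (asm) ennreal_less_iff) auto
      then have "rr x powr \<beta> < m / L" using L by (simp add: field_simps)
      then have "(rr x powr \<beta>) powr (1/\<beta>) < (m / L) powr (1/\<beta>)"
        using b(1) by (intro powr_less_mono2) auto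
      then show ?thesis using b(1) rr[OF x] by (simp add: B_def powr_powr)
    qed
    have rb: "\<And>i. i \<in> S \<Longrightarrow> 0 < rr i \<and> rr i \<le> B" using rr rrB by (meson less_imp_le)
    have cov: "S \<subseteq> (\<Union>x\<in>S. ball (id x) (rr x))" using rr by auto
    obtain C where C: "countable C" "C \<subseteq> S"
      and disj: "pairwise (\<lambda>i j. disjnt (ball (id i) (rr i)) (ball (id j) (rr j))) C"
      and cov5: "S \<subseteq> (\<Union>i\<in>C. ball (id i) (5 * rr i))"
      using Vitali_covering_lemma_balls[OF cov rb] by blast
    define U where "U = (\<Union>i\<in>C. ball i (5 * rr i))"
    have Um: "U \<in> sets lebesgue" unfolding U_def
      using C(1) by (intro sets.countable_UN') auto
    define \<kappa> where "\<kappa> = 10^DIM('a) * B powr (real DIM('a) - \<beta>) / L"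
    have \<kappa>0: "0 \<le> \<kappa>" using L by (simp add: \<kappa>_def)
    have ballb: "emeasure lebesgue (ball i (5 * rr i)) \<le> ennreal \<kappa> * emeasure N (P i (rr i))"
      if i: "i \<in> C" for i
    proof -
      have iS: "i \<in> S" using i C(2) by auto
      have r0: "0 < rr i" using rr[OF iS] by simp
      have e1: "emeasure lebesgue (ball i (5 * rr i)) \<le> ennreal ((2 * (5 * rr i))^DIM('a))"
        using r0 by (intro lebesgue_ball_le) simp
      have "(2 * (5 * rr i))^DIM('a) = 10^DIM('a) * rr i powr (real DIM('a))"
        using r0 by (simp add: powr_realpow power_mult_distrib)
      also have "rr i powr (real DIM('a)) = rr i powr \<beta> * rr i powr (real DIM('a) - \<beta>)"
        using r0 by (simp add: powr_add[symmetric])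
      also have "\<dots> \<le> rr i powr \<beta> * B powr (real DIM('a) - \<beta>)"
        using r0 rrB[OF iS] b by (intro mult_left_mono powr_mono2) auto
      finally have "(2 * (5 * rr i))^DIM('a) \<le> 10^DIM('a) * (rr i powr \<beta> * B powr (real DIM('a) - \<beta>))"
        by simp
      also have "\<dots> = \<kappa> * (L * rr i powr \<beta>)"
        using L by (simp add: \<kappa>_def field_simps)
      finally have "emeasure lebesgue (ball i (5 * rr i)) \<le> ennreal (\<kappa> * (L * rr i powr \<beta>))"
        using e1 by (meson ennreal_leI order_trans)
      also have "\<dots> = ennreal \<kappa> * ennreal (L * rr i powr \<beta>)"
        using \<kappa>0 L by (simp add: ennreal_mult)
      also have "\<dots> \<le> ennreal \<kappa> * emeasure N (P i (rr i))"
        using rr[OF iS] by (intro mult_left_mono) auto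
      finally show ?thesis .
    qed
    have "emeasure lebesgue U \<le> (\<integral>\<^sup>+i. emeasure lebesgue (ball i (5 * rr i)) \<partial>count_space C)"
      unfolding U_def using C(1) by (intro emeasure_UN_countable_le) auto
    also have "\<dots> \<le> (\<integral>\<^sup>+i. ennreal \<kappa> * emeasure N (P i (rr i)) \<partial>count_space C)"
      using ballb by (intro nn_integral_mono) auto
    also have "\<dots> = ennreal \<kappa> * (\<integral>\<^sup>+i. emeasure N (P i (rr i)) \<partial>count_space C)"
      by (rule nn_integral_cmult) simp
    also have "(\<integral>\<^sup>+i. emeasure N (P i (rr i)) \<partial>count_space C) = emeasure N (\<Union>i\<in>C. P i (rr i))"
    proof (rule emeasure_UN_countable[symmetric])
      show "disjoint_family_on (\<lambda>i. P i (rr i)) C"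
        unfolding disjoint_family_on_def
      proof (intro ballI impI)
        fix i j assume ij: "i \<in> C" "j \<in> C" "i \<noteq> j"
        then have "disjnt (ball i (rr i)) (ball j (rr j))" using disj by (auto simp: pairwise_def)
        then show "P i (rr i) \<inter> P j (rr j) = {}"
          by (auto simp: P_def disjnt_def)
      qed
    qed (use C(1) Pm in auto)
    also have "emeasure N (\<Union>i\<in>C. P i (rr i)) \<le> ennreal m"
    proof -
      have "emeasure N (\<Union>i\<in>C. P i (rr i)) \<le> emeasure N T"
        by (rule emeasure_mono) (auto simp: P_def T)
      then show ?thesis by (simp add: m_def emeasure_eq_measure)
    qed
    finally have "emeasure lebesgue U \<le> ennreal \<kappa> * ennreal m"
      by (simp add: mult_left_mono)
    also have "\<dots> = ennreal (\<kappa> * m)" using \<kappa>0 m0 by (simp add: ennreal_mult)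
    also have "\<kappa> * m = 10^DIM('a) * (m / L) powr (real DIM('a) / \<beta>)"
    proof -
      have "B powr (real DIM('a) - \<beta>) * (m / L) = (m/L) powr ((real DIM('a) - \<beta>)/\<beta>) * (m/L) powr 1"
        using mpos L by (simp add: B_def powr_powr)
      also have "\<dots> = (m/L) powr ((real DIM('a) - \<beta>)/\<beta> + 1)"
        by (simp only: powr_add)
      also have "(real DIM('a) - \<beta>)/\<beta> + 1 = real DIM('a) / \<beta>"
        using b(1) by (simp add: field_simps)
      finally have "B powr (real DIM('a) - \<beta>) * (m / L) = (m/L) powr (real DIM('a) / \<beta>)" .
      moreover have "\<kappa> * m = 10^DIM('a) * (B powr (real DIM('a) - \<beta>) * (m / L))"
        unfolding \<kappa>_def by simp
      ultimately show ?thesis by simp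
    qed
    finally have "emeasure lebesgue U \<le> ennreal (10^DIM('a) * (measure N T / L) powr (real DIM('a) / \<beta>))"
      by (simp add: m_def)
    moreover have "{x. \<exists>r>0. ennreal (L * r powr \<beta>) < emeasure N {y\<in>space N. y \<in> T \<and> g y \<in> ball x r}} \<subseteq> U"
      using cov5 by (simp add: U_def S_def P_def)
    ultimately show ?thesis using Um by blast
  qed
qed

lemma c_facts:
  fixes \<Phi> :: "real \<Rightarrow> real"
  assumes Phi_nonneg: "\<And>s. 0 \<le> s \<Longrightarrow> 0 \<le> \<Phi> s"
    and Phi_decr: "\<And>s t. 0 \<le> s \<Longrightarrow> s \<le> t \<Longrightarrow> \<Phi> t \<le> \<Phi> s"
    and R0: "0 < R0" "\<And>s. s \<ge> R0 \<Longrightarrow> \<Phi> s = 0" and b: "0 < \<beta>"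
  shows "bdd_above ((\<lambda>s. s powr \<beta> * \<Phi> s) ` {0<..})"
    and "\<And>s. 0 < s \<Longrightarrow> s powr \<beta> * \<Phi> s \<le> Sup ((\<lambda>s. s powr \<beta> * \<Phi> s) ` {0<..})"
    and "0 \<le> Sup ((\<lambda>s. s powr \<beta> * \<Phi> s) ` {0<..})"
proof -
  show bdd: "bdd_above ((\<lambda>s. s powr \<beta> * \<Phi> s) ` {0<..})"
  proof (rule bdd_aboveI2)
    fix s :: real assume s: "s \<in> {0<..}"
    show "s powr \<beta> * \<Phi> s \<le> R0 powr \<beta> * \<Phi> 0"
    proof (cases "s \<ge> R0")
      case True then show ?thesis using R0 Phi_nonneg[of 0] by simp
    next
      case False
      then show ?thesis using s b Phi_nonneg[of s] Phi_decr[of 0 s] Phi_nonneg[of 0]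
        by (intro mult_mono powr_mono2) auto
    qed
  qed
  show le: "\<And>s. 0 < s \<Longrightarrow> s powr \<beta> * \<Phi> s \<le> Sup ((\<lambda>s. s powr \<beta> * \<Phi> s) ` {0<..})"
    using bdd by (intro cSUP_upper) auto
  show "0 \<le> Sup ((\<lambda>s. s powr \<beta> * \<Phi> s) ` {0<..})"
    using le[of 1] Phi_nonneg[of 1] by simp
qed

lemma rescale:
  fixes \<Phi> :: "real \<Rightarrow> real"
  assumes "0 < u" "0 < r"
  shows "r powr (-\<beta>) * \<Phi> (u / r) = u powr (-\<beta>) * ((u / r) powr \<beta> * \<Phi> (u / r))"
  using assms by (simp add: powr_divide powr_minus field_simps)

lemma Psi_lower:
  fixes \<Phi> :: "real \<Rightarrow> real" and G :: ereal
  assumes Phi_nonneg: "\<And>s. 0 \<le> s \<Longrightarrow> 0 \<le> \<Phi> s"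
    and Phi_decr: "\<And>s t. 0 \<le> s \<Longrightarrow> s \<le> t \<Longrightarrow> \<Phi> t \<le> \<Phi> s"
    and R0: "0 < R0" "\<And>s. s \<ge> R0 \<Longrightarrow> \<Phi> s = 0" and b: "0 < \<beta>"
    and u: "0 < u" and k: "0 \<le> k"
    and H: "\<And>r. 0 < r \<Longrightarrow> ereal (r powr (-\<beta>) * \<Phi> (u / r) * k) \<le> G"
  shows "ereal (Sup ((\<lambda>s. s powr \<beta> * \<Phi> s) ` {0<..}) * u powr (-\<beta>) * k) \<le> G"
proof -
  note cf = c_facts[OF Phi_nonneg Phi_decr R0 b]
  define c where "c = Sup ((\<lambda>s. s powr \<beta> * \<Phi> s) ` {0<..})"
  have hs: "ereal (u powr (-\<beta>) * k * (s powr \<beta> * \<Phi> s)) \<le> G" if s: "0 < s" for s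
  proof -
    have "u / (u / s) = s" using u s by simp
    then have eq: "(u / s) powr (-\<beta>) * \<Phi> (u / (u / s)) * k = u powr (-\<beta>) * k * (s powr \<beta> * \<Phi> s)"
      using rescale[where \<Phi>=\<Phi> and u=u and r="u/s" and \<beta>=\<beta>] u s by (simp add: field_simps)
    have "0 < u / s" using u s by simp
    from H[OF this] show ?thesis by (simp only: eq)
  qed
  show ?thesis
  proof (cases G)
    case PInf then show ?thesis by simp
  next
    case MInf
    with hs[of 1] show ?thesis by simp
  next
    case (real g)
    show ?thesis
    proof (cases "u powr (-\<beta>) * k = 0")
      case True
      then have "k = 0" using u by simp
      with hs[of 1] show ?thesis by simp
    next
      case False
      then have pos: "0 < u powr (-\<beta>) * k" using k u by (simp add: less_le)
      have "c \<le> g / (u powr (-\<beta>) * k)" unfolding c_def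
      proof (rule cSUP_least)
        fix s :: real assume "s \<in> {0<..}"
        then have "u powr (-\<beta>) * k * (s powr \<beta> * \<Phi> s) \<le> g" using hs[of s] real by simp
        then show "s powr \<beta> * \<Phi> s \<le> g / (u powr (-\<beta>) * k)" using pos by (simp add: field_simps)
      qed simp
      then have "c * (u powr (-\<beta>) * k) \<le> g" using pos by (simp add: field_simps)
      then show ?thesis using real by (simp add: c_def[symmetric] mult.assoc)
    qed
  qed
qed

lemma Psi_eq:
  fixes \<Phi> :: "real \<Rightarrow> real"
  assumes Phi_nonneg: "\<And>s. 0 \<le> s \<Longrightarrow> 0 \<le> \<Phi> s"
    and Phi_decr: "\<And>s t. 0 \<le> s \<Longrightarrow> s \<le> t \<Longrightarrow> \<Phi> t \<le> \<Phi> s"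
    and R0: "0 < R0" "\<And>s. s \<ge> R0 \<Longrightarrow> \<Phi> s = 0" and b: "0 < \<beta>"
    and u: "0 < u"
  shows "(SUP r\<in>{0<..}. ereal (r powr (-\<beta>) * \<Phi> (u / r))) = ereal (Sup ((\<lambda>s. s powr \<beta> * \<Phi> s) ` {0<..}) * u powr (-\<beta>))"
proof (rule antisym)
  note cf = c_facts[OF Phi_nonneg Phi_decr R0 b]
  show "(SUP r\<in>{0<..}. ereal (r powr (-\<beta>) * \<Phi> (u / r))) \<le> ereal (Sup ((\<lambda>s. s powr \<beta> * \<Phi> s) ` {0<..}) * u powr (-\<beta>))"
  proof (rule SUP_least)
    fix r :: real assume r: "r \<in> {0<..}"
    have "r powr (-\<beta>) * \<Phi> (u / r) = u powr (-\<beta>) * ((u / r) powr \<beta> * \<Phi> (u / r))"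
      using rescale u r by auto
    also have "\<dots> \<le> u powr (-\<beta>) * Sup ((\<lambda>s. s powr \<beta> * \<Phi> s) ` {0<..})"
      using cf(2)[where s="u/r"] u r by (intro mult_left_mono) auto
    finally show "ereal (r powr (-\<beta>) * \<Phi> (u / r)) \<le> ereal (Sup ((\<lambda>s. s powr \<beta> * \<Phi> s) ` {0<..}) * u powr (-\<beta>))"
      by (simp add: mult.commute)
  qed
  show "ereal (Sup ((\<lambda>s. s powr \<beta> * \<Phi> s) ` {0<..}) * u powr (-\<beta>)) \<le> (SUP r\<in>{0<..}. ereal (r powr (-\<beta>) * \<Phi> (u / r)))"
  proof -
    have h: "\<And>r. 0 < r \<Longrightarrow> ereal (r powr (-\<beta>) * \<Phi> (u / r) * 1) \<le> (SUP r\<in>{0<..}. ereal (r powr (-\<beta>) * \<Phi> (u / r)))"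
      by (simp, rule SUP_upper, simp)
    from Psi_lower[of \<Phi> R0 \<beta> u 1 "SUP r\<in>{0<..}. ereal (r powr (-\<beta>) * \<Phi> (u / r))", OF assms(1,2,3,4,5,6) _ h]
    show ?thesis by simp
  qed
qed

lemma Phi_norm_meas:
  fixes \<Phi> :: "real \<Rightarrow> real" and h :: "'a::euclidean_space \<Rightarrow> real"
  assumes Phi_decr: "\<And>s t. 0 \<le> s \<Longrightarrow> s \<le> t \<Longrightarrow> \<Phi> t \<le> \<Phi> s"
    and h: "h \<in> borel_measurable borel" and hpos: "\<And>y. 0 \<le> h y"
  shows "(\<lambda>y. ennreal (\<Phi> (h y))) \<in> borel_measurable borel"
proof -
  have "mono (\<lambda>s. - \<Phi> (max 0 s))"
    by (rule monoI) (simp add: Phi_decr)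
  then have "(\<lambda>s. - \<Phi> (max 0 s)) \<in> borel_measurable borel" by (rule borel_measurable_mono)
  then have m: "(\<lambda>s. \<Phi> (max 0 s)) \<in> borel_measurable borel"
    using borel_measurable_uminus by fastforce
  have "(\<lambda>y. \<Phi> (max 0 (h y))) \<in> borel_measurable borel"
    using measurable_compose[OF h m] by (simp add: o_def)
  then have "(\<lambda>y. \<Phi> (h y)) \<in> borel_measurable borel"
    using hpos by (simp add: max_def)
  then show ?thesis by measurable
qed

lemma frac_max_eq:
  fixes \<Phi> :: "real \<Rightarrow> real" and V :: "'a::euclidean_space measure"
  assumes Phi_decr: "\<And>s t. 0 \<le> s \<Longrightarrow> s \<le> t \<Longrightarrow> \<Phi> t \<le> \<Phi> s"
    and V_borel: "sets V = sets borel" and t: "0 < t"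
  shows "frac_max \<alpha> (\<lambda>z. \<Phi> (norm z)) (dilate_measure t V) x =
    (SUP r\<in>{0<..}. enn2ereal (ennreal (1 / r powr (real DIM('a) - \<alpha>)) *
        (\<integral>\<^sup>+ y. ennreal (\<Phi> (norm (x - t *\<^sub>R y) / r)) \<partial>V)))"
  unfolding frac_max_def dilate_measure_def
proof (rule SUP_cong[OF refl])
  fix r :: real assume r: "r \<in> {0<..}"
  have meas: "(\<lambda>y. t *\<^sub>R y) \<in> V \<rightarrow>\<^sub>M borel"
    using V_borel by (simp add: measurable_cong_sets[OF V_borel refl])
  have nr: "norm ((1 / r) *\<^sub>R z) = norm z / r" for z :: 'a using r by simp
  have mf: "(\<lambda>y. ennreal (\<Phi> (norm (x - y) / r))) \<in> borel_measurable borel"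
    by (rule Phi_norm_meas[OF Phi_decr]) (use r in auto)
  have I: "(\<integral>\<^sup>+ y. ennreal (\<Phi> (norm ((1 / r) *\<^sub>R (x - y)))) \<partial>distr V borel (\<lambda>y. t *\<^sub>R y))
      = (\<integral>\<^sup>+ y. ennreal (\<Phi> (norm (x - t *\<^sub>R y) / r)) \<partial>V)" if "(\<lambda>y. ennreal (\<Phi> (norm (x - y) / r))) \<in> borel_measurable borel"
  proof -
    have eq: "(\<lambda>y. ennreal (\<Phi> (norm ((1 / r) *\<^sub>R (x - y))))) = (\<lambda>y. ennreal (\<Phi> (norm (x - y) / r)))"
      by (rule ext) (simp only: nr)
    show ?thesis unfolding eq by (subst nn_integral_distr[OF meas]) (use that in simp_all)
  qed
  show "enn2ereal (ennreal (1 / r powr (real DIM('a) - \<alpha>)) *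
        (\<integral>\<^sup>+ y. ennreal (\<Phi> (norm ((1 / r) *\<^sub>R (x - y)))) \<partial>distr V borel (\<lambda>y. t *\<^sub>R y))) =
      enn2ereal (ennreal (1 / r powr (real DIM('a) - \<alpha>)) *
        (\<integral>\<^sup>+ y. ennreal (\<Phi> (norm (x - t *\<^sub>R y) / r)) \<partial>V))" by (simp only: I[OF mf])
qed

lemma int_upper:
  fixes \<Phi> :: "real \<Rightarrow> real" and V :: "'a::euclidean_space measure"
  assumes Phi_nonneg: "\<And>s. 0 \<le> s \<Longrightarrow> 0 \<le> \<Phi> s"
    and Phi_decr: "\<And>s t. 0 \<le> s \<Longrightarrow> s \<le> t \<Longrightarrow> \<Phi> t \<le> \<Phi> s"
    and R0: "\<And>s. s \<ge> R0 \<Longrightarrow> \<Phi> s = 0" and R0pos: "0 < R0"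
    and \<phi>1: "\<Phi> 0 \<le> \<phi>1"
    and V_borel: "sets V = sets borel" and t: "0 < t" and r: "0 < r" and K: "0 \<le> K"
    and x: "t * K \<le> norm x"
  shows "(\<integral>\<^sup>+ y. ennreal (\<Phi> (norm (x - t *\<^sub>R y) / r)) \<partial>V) \<le>
     ennreal (\<Phi> ((norm x - t * K) / r)) * emeasure V UNIV +
     ennreal \<phi>1 * emeasure V {y\<in>space V. y \<in> {y. K < norm y} \<and> t *\<^sub>R y \<in> ball x (R0 * r)}"
proof -
  define A where "A = {y\<in>space V. y \<in> {y. K < norm y} \<and> t *\<^sub>R y \<in> ball x (R0 * r)}"
  have spV: "space V = UNIV" using sets_eq_imp_space_eq[OF V_borel] by simp
  have Am: "A \<in> sets V"
  proof -
    have "A = {y. K < norm y} \<inter> (\<lambda>y. t *\<^sub>R y) -` ball x (R0 * r)" by (auto simp: A_def spV)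
    also have "\<dots> \<in> sets borel"
    proof (rule sets.Int)
      show "{y::'a. K < norm y} \<in> sets borel" by measurable
      have "open ((\<lambda>y::'a. t *\<^sub>R y) -` ball x (R0 * r))"
        by (rule continuous_open_vimage) (auto intro: continuous_intros)
      then show "(\<lambda>y::'a. t *\<^sub>R y) -` ball x (R0 * r) \<in> sets borel" by simp
    qed
    finally show ?thesis using V_borel by simp
  qed
  have pw: "ennreal (\<Phi> (norm (x - t *\<^sub>R y) / r)) \<le>
      ennreal (\<Phi> ((norm x - t * K) / r)) + ennreal \<phi>1 * indicator A y" for y
  proof (cases "norm y \<le> K")
    case True
    have "norm (t *\<^sub>R y) \<le> t * K" using True t by (simp add: mult_left_mono)
    then have "norm x - t * K \<le> norm (x - t *\<^sub>R y)" using norm_triangle_ineq2[of x "t *\<^sub>R y"] by linarith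
    then have "(norm x - t * K) / r \<le> norm (x - t *\<^sub>R y) / r" using r by (simp add: divide_right_mono)
    then have "\<Phi> (norm (x - t *\<^sub>R y) / r) \<le> \<Phi> ((norm x - t * K) / r)"
      using Phi_decr x r by simp
    then show ?thesis by (simp add: add_increasing2 ennreal_leI)
  next
    case False
    show ?thesis
    proof (cases "norm (x - t *\<^sub>R y) < R0 * r")
      case True
      then have yA: "y \<in> A" using False by (simp add: A_def spV dist_norm)
      have "\<Phi> (norm (x - t *\<^sub>R y) / r) \<le> \<phi>1"
        using Phi_decr[of 0 "norm (x - t *\<^sub>R y) / r"] \<phi>1 r by simp
      then show ?thesis using yA by (simp add: add_increasing ennreal_leI)
    next
      case False
      then have "R0 \<le> norm (x - t *\<^sub>R y) / r" using r by (simp add: pos_le_divide_eq mult.commute)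
      then show ?thesis using R0 by simp
    qed
  qed
  have "(\<integral>\<^sup>+ y. ennreal (\<Phi> (norm (x - t *\<^sub>R y) / r)) \<partial>V) \<le>
      (\<integral>\<^sup>+ y. ennreal (\<Phi> ((norm x - t * K) / r)) + ennreal \<phi>1 * indicator A y \<partial>V)"
    by (rule nn_integral_mono) (rule pw)
  also have "\<dots> = (\<integral>\<^sup>+ y. ennreal (\<Phi> ((norm x - t * K) / r)) \<partial>V) + (\<integral>\<^sup>+ y. ennreal \<phi>1 * indicator A y \<partial>V)"
    using Am by (intro nn_integral_add) auto
  also have "\<dots> = ennreal (\<Phi> ((norm x - t * K) / r)) * emeasure V UNIV + ennreal \<phi>1 * emeasure V A"
    using Am by (simp add: nn_integral_cmult_indicator spV[symmetric] nn_integral_const)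
  finally show ?thesis by (simp add: A_def)
qed

lemma int_lower:
  fixes \<Phi> :: "real \<Rightarrow> real" and V :: "'a::euclidean_space measure"
  assumes Phi_nonneg: "\<And>s. 0 \<le> s \<Longrightarrow> 0 \<le> \<Phi> s"
    and Phi_decr: "\<And>s t. 0 \<le> s \<Longrightarrow> s \<le> t \<Longrightarrow> \<Phi> t \<le> \<Phi> s"
    and V_borel: "sets V = sets borel" and t: "0 < t" and r: "0 < r" and K: "0 \<le> K"
  shows "ennreal (\<Phi> ((norm x + t * K) / r)) * emeasure V {y. norm y \<le> K} \<le>
     (\<integral>\<^sup>+ y. ennreal (\<Phi> (norm (x - t *\<^sub>R y) / r)) \<partial>V)"
proof -
  have Bm: "{y::'a. norm y \<le> K} \<in> sets V" using V_borel by simp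
  have "ennreal (\<Phi> ((norm x + t * K) / r)) * emeasure V {y. norm y \<le> K} =
     (\<integral>\<^sup>+ y. ennreal (\<Phi> ((norm x + t * K) / r)) * indicator {y. norm y \<le> K} y \<partial>V)"
    using Bm by (simp add: nn_integral_cmult_indicator)
  also have "\<dots> \<le> (\<integral>\<^sup>+ y. ennreal (\<Phi> (norm (x - t *\<^sub>R y) / r)) \<partial>V)"
  proof (rule nn_integral_mono)
    fix y :: 'a
    show "ennreal (\<Phi> ((norm x + t * K) / r)) * indicator {y. norm y \<le> K} y \<le> ennreal (\<Phi> (norm (x - t *\<^sub>R y) / r))"
    proof (cases "norm y \<le> K")
      case True
      have "norm (t *\<^sub>R y) \<le> t * K" using True t by (simp add: mult_left_mono)
      then have "norm (x - t *\<^sub>R y) \<le> norm x + t * K" using norm_triangle_ineq4[of x "t *\<^sub>R y"] by linarith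
      then have "norm (x - t *\<^sub>R y) / r \<le> (norm x + t * K) / r" using r by (simp add: divide_right_mono)
      then have "\<Phi> ((norm x + t * K) / r) \<le> \<Phi> (norm (x - t *\<^sub>R y) / r)"
        using Phi_decr r by simp
      then show ?thesis using True by (simp add: ennreal_leI)
    qed simp
  qed
  finally show ?thesis .
qed

lemma ereal_abs_contra:
  fixes G :: ereal
  assumes "G \<le> ereal (X + l/2)" "ereal Y \<le> G" "X - A \<le> l/2" "A - Y \<le> l/2"
  shows "\<not> (\<bar>G - ereal A\<bar> > ereal l)"
proof -
  obtain g where g: "G = ereal g" using assms(1,2) by (cases G) auto
  have "\<bar>g - A\<bar> \<le> l" using assms g by auto
  then show ?thesis using g by simp
qed

lemma real_ineqs:
  fixes \<beta> \<rho> u a c M m Mk l \<kappa> :: real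
  assumes b: "0 < \<beta>" and rho: "0 < \<rho>" and u: "\<rho> \<le> u" and a: "0 \<le> a" "a \<le> \<rho>/2"
    and c: "0 \<le> c" and M: "0 \<le> M" and m: "0 \<le> m" and Mk: "M - m \<le> Mk"
    and k1: "c * M * ((1 - a/\<rho>) powr (-\<beta>) - (1 + a/\<rho>) powr (-\<beta>)) + c * m \<le> \<kappa>"
    and k2: "\<kappa> * u powr (-\<beta>) \<le> l/2"
  shows "c * (u - a) powr (-\<beta>) * M - c * u powr (-\<beta>) * M \<le> l/2"
    and "c * u powr (-\<beta>) * M - c * (u + a) powr (-\<beta>) * Mk \<le> l/2"
proof -
  have u0: "0 < u" using u rho by simp
  have s: "a / u \<le> a / \<rho>" using a u rho by (simp add: divide_left_mono)
  have s1: "a / \<rho> \<le> 1/2" using a rho by simp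
  have s0: "0 \<le> a / u" using a u0 by simp
  have s2: "a / \<rho> < 1" using s1 by linarith
  have e1: "(u - a) powr (-\<beta>) = u powr (-\<beta>) * (1 - a/u) powr (-\<beta>)"
  proof -
    have "u - a = u * (1 - a/u)" using u0 by (simp add: field_simps)
    then show ?thesis using u0 s0 s s1 by (simp add: powr_mult)
  qed
  have e2: "(u + a) powr (-\<beta>) = u powr (-\<beta>) * (1 + a/u) powr (-\<beta>)"
  proof -
    have "u + a = u * (1 + a/u)" using u0 by (simp add: field_simps)
    then show ?thesis using u0 s0 by (simp add: powr_mult)
  qed
  have i1: "(1 - a/u) powr (-\<beta>) \<le> (1 - a/\<rho>) powr (-\<beta>)"
    using s s2 b by (intro powr_mono2') auto
  have i2: "(1 + a/\<rho>) powr (-\<beta>) \<le> (1 + a/u) powr (-\<beta>)"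
    using s s0 b by (intro powr_mono2') auto
  have i3: "(1 + a/u) powr (-\<beta>) \<le> 1"
    using s0 b powr_mono2'[of "-\<beta>" 1 "1 + a/u"] by simp
  have i4: "1 \<le> (1 - a/u) powr (-\<beta>)"
    using s0 s s2 b powr_mono2'[of "-\<beta>" "1 - a/u" 1] by simp
  define g where "g = (1 - a/\<rho>) powr (-\<beta>) - (1 + a/\<rho>) powr (-\<beta>)"
  have g0: "0 \<le> g" using i1 i2 i3 i4 by (simp add: g_def)
  have up0: "0 \<le> u powr (-\<beta>)" by simp
  have cM: "0 \<le> c * M" using c M by simp
  have "c * (u - a) powr (-\<beta>) * M - c * u powr (-\<beta>) * M = c * M * u powr (-\<beta>) * ((1 - a/u) powr (-\<beta>) - 1)"
    by (simp add: e1 algebra_simps)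
  also have "\<dots> \<le> c * M * u powr (-\<beta>) * g"
    using i1 i2 i3 cM up0 by (intro mult_left_mono) (auto simp: g_def mult_nonneg_nonneg)
  also have "\<dots> \<le> \<kappa> * u powr (-\<beta>)"
  proof -
    have "c * M * g \<le> \<kappa>" using k1 c m by (simp add: g_def) (smt (verit) mult_nonneg_nonneg)
    moreover have "c * M * u powr (-\<beta>) * g = (c * M * g) * u powr (-\<beta>)" by (simp only: mult_ac)
    ultimately show ?thesis using up0 by (metis mult_right_mono)
  qed
  finally show "c * (u - a) powr (-\<beta>) * M - c * u powr (-\<beta>) * M \<le> l/2" using k2 by simp
  have "c * u powr (-\<beta>) * M - c * (u + a) powr (-\<beta>) * Mk \<le>
        c * u powr (-\<beta>) * M - c * (u + a) powr (-\<beta>) * (M - m)"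
  proof -
    have "c * (u + a) powr (-\<beta>) * (M - m) \<le> c * (u + a) powr (-\<beta>) * Mk"
      using Mk c by (intro mult_left_mono) auto
    then show ?thesis by simp
  qed
  also have "\<dots> = c * M * u powr (-\<beta>) * (1 - (1 + a/u) powr (-\<beta>)) + c * m * (u powr (-\<beta>) * (1 + a/u) powr (-\<beta>))"
    unfolding e2 by (simp add: algebra_simps)
  also have "\<dots> \<le> c * M * u powr (-\<beta>) * g + c * m * u powr (-\<beta>)"
  proof (rule add_mono)
    show "c * M * u powr (-\<beta>) * (1 - (1 + a/u) powr (-\<beta>)) \<le> c * M * u powr (-\<beta>) * g"
      using i2 i4 i1 cM up0 by (intro mult_left_mono) (auto simp: g_def)
    show "c * m * (u powr (-\<beta>) * (1 + a/u) powr (-\<beta>)) \<le> c * m * u powr (-\<beta>)"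
      using i3 c m up0 by (intro mult_left_mono) (auto simp: mult_left_le)
  qed
  also have "\<dots> = (c * M * g + c * m) * u powr (-\<beta>)" by (simp add: algebra_simps)
  also have "\<dots> \<le> \<kappa> * u powr (-\<beta>)" using k1 up0 by (intro mult_right_mono) (auto simp: g_def)
  finally show "c * u powr (-\<beta>) * M - c * (u + a) powr (-\<beta>) * Mk \<le> l/2" using k2 by simp
qed

theorem corollary1p2:
  fixes \<Phi> :: "real \<Rightarrow> real" and \<alpha> \<rho> :: real and V :: "'a::euclidean_space measure"
  assumes alpha: "0 \<le> \<alpha>" "\<alpha> < real DIM('a)"
    and Phi_nonneg: "\<And>s. 0 \<le> s \<Longrightarrow> 0 \<le> \<Phi> s"
    and Phi_decr: "\<And>s t. 0 \<le> s \<Longrightarrow> s \<le> t \<Longrightarrow> \<Phi> t \<le> \<Phi> s"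
    and Phi_bdd: "bdd_above (\<Phi> ` {0..})"
    and Phi_supp: "\<exists>R. \<forall>s\<ge>R. \<Phi> s = 0"
    and V_borel: "sets V = sets borel"
    and V_fin: "finite_measure V"
    and rho: "\<rho> > 0"
  shows "((\<lambda>t. weak_Lp_norm (real DIM('a) / (real DIM('a) - \<alpha>)) (UNIV - ball 0 \<rho>)
            (\<lambda>x. frac_max \<alpha> (\<lambda>z. \<Phi> (norm z)) (dilate_measure t V) x
                 - (SUP r\<in>{0<..}. ereal (dil_kernel (\<lambda>z. \<Phi> (norm z)) \<alpha> r x))
                   * ereal (measure V UNIV)))
          \<longlongrightarrow> 0) (at_right 0)"
proof -
  define \<beta> where "\<beta> = real DIM('a) - \<alpha>"
  have b: "0 < \<beta>" "\<beta> \<le> real DIM('a)" using alpha by (auto simp: \<beta>_def)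
  define p where "p = real DIM('a) / \<beta>"
  have p0: "0 < p" using b by (simp add: p_def)
  have pe: "real DIM('a) / (real DIM('a) - \<alpha>) = p" by (simp add: p_def \<beta>_def)
  obtain R where R: "\<forall>s\<ge>R. \<Phi> s = 0" using Phi_supp by blast
  define R0 where "R0 = max R 1"
  have R0: "0 < R0" "\<And>s. s \<ge> R0 \<Longrightarrow> \<Phi> s = 0" using R by (auto simp: R0_def)
  define c where "c = Sup ((\<lambda>s. s powr \<beta> * \<Phi> s) ` {0<..})"
  have c0: "0 \<le> c" using c_facts(3)[OF Phi_nonneg Phi_decr R0 b(1)] by (simp add: c_def)
  have cle: "\<And>s. 0 < s \<Longrightarrow> s powr \<beta> * \<Phi> s \<le> c"
    using c_facts(2)[OF Phi_nonneg Phi_decr R0 b(1)] by (simp add: c_def)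
  define \<phi>1 where "\<phi>1 = \<Phi> 0 + 1"
  have \<phi>1: "0 < \<phi>1" "\<Phi> 0 \<le> \<phi>1" using Phi_nonneg[of 0] by (auto simp: \<phi>1_def)
  interpret V: finite_measure V by (rule V_fin)
  have spV: "space V = UNIV" using sets_eq_imp_space_eq[OF V_borel] by simp
  define M where "M = measure V UNIV"
  have M0: "0 \<le> M" by (simp add: M_def)
  have Feq: "(SUP r\<in>{0<..}. ereal (dil_kernel (\<lambda>z. \<Phi> (norm z)) \<alpha> r x)) = ereal (c * norm x powr (-\<beta>))"
    if xnz: "x \<noteq> 0" for x :: 'a
  proof -
    have "(SUP r\<in>{0<..}. ereal (dil_kernel (\<lambda>z. \<Phi> (norm z)) \<alpha> r x)) =
          (SUP r\<in>{0<..}. ereal (r powr (-\<beta>) * \<Phi> (norm x / r)))"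
    proof (rule SUP_cong[OF refl])
      fix r :: real assume "r \<in> {0<..}"
      then show "ereal (dil_kernel (\<lambda>z. \<Phi> (norm z)) \<alpha> r x) = ereal (r powr (-\<beta>) * \<Phi> (norm x / r))"
        by (simp add: dil_kernel_def \<beta>_def)
    qed
    also have "\<dots> = ereal (c * norm x powr (-\<beta>))"
      unfolding c_def using xnz by (intro Psi_eq[OF Phi_nonneg Phi_decr R0 b(1)]) auto
    finally show ?thesis .
  qed
  define W where "W t = weak_Lp_norm (real DIM('a) / (real DIM('a) - \<alpha>)) (UNIV - ball 0 \<rho>)
            (\<lambda>x. frac_max \<alpha> (\<lambda>z. \<Phi> (norm z)) (dilate_measure t V) x
                 - (SUP r\<in>{0<..}. ereal (dil_kernel (\<lambda>z. \<Phi> (norm z)) \<alpha> r x))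
                   * ereal (measure V UNIV))" for t
  have main: "eventually (\<lambda>t. W t \<le> ennreal \<epsilon>) (at_right 0)" if \<epsilon>: "0 < \<epsilon>" for \<epsilon> :: real
  proof -
    define A0 where "A0 = 2^DIM('a) * 4 powr p + 10^DIM('a) * 2 powr p"
    have A0: "0 < A0" unfolding A0_def by (intro add_pos_pos mult_pos_pos) auto
    define \<eta> where "\<eta> = \<epsilon> / A0 powr (1/p)"
    have \<eta>: "0 < \<eta>" using \<epsilon> A0 by (simp add: \<eta>_def)
    have \<eta>p: "A0 * \<eta> powr p = \<epsilon> powr p"
    proof -
      have "\<eta> powr p = \<epsilon> powr p / (A0 powr (1/p)) powr p"
        using \<epsilon> A0 by (simp add: \<eta>_def powr_divide)
      also have "(A0 powr (1/p)) powr p = A0" using A0 p0 by (simp add: powr_powr)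
      finally show ?thesis using A0 by simp
    qed
    define \<delta> where "\<delta> = \<eta> / (c + \<phi>1 * R0 powr \<beta> + 1)"
    have den: "0 < c + \<phi>1 * R0 powr \<beta> + 1" using c0 \<phi>1 by (simp add: add_nonneg_pos)
    have \<delta>: "0 < \<delta>" "c * \<delta> \<le> \<eta>" "\<phi>1 * R0 powr \<beta> * \<delta> \<le> \<eta>"
    proof -
      show "0 < \<delta>" using \<eta> den by (simp add: \<delta>_def)
      have "c \<le> c + \<phi>1 * R0 powr \<beta> + 1" "\<phi>1 * R0 powr \<beta> \<le> c + \<phi>1 * R0 powr \<beta> + 1"
        using c0 \<phi>1 by auto
      then show "c * \<delta> \<le> \<eta>" "\<phi>1 * R0 powr \<beta> * \<delta> \<le> \<eta>"
        using \<eta> den c0 \<phi>1 by (auto simp: \<delta>_def field_simps mult_right_mono)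
    qed
    obtain K where K: "0 \<le> K" "measure V {y. K < norm y} \<le> \<delta>"
    proof -
      define A where "A k = {y::'a. real k < norm y}" for k :: nat
      have lim: "(\<lambda>k. measure V (A k)) \<longlonglongrightarrow> measure V (\<Inter>k. A k)"
        by (rule V.finite_Lim_measure_decseq) (auto simp: decseq_def A_def V_borel)
      have "(\<Inter>k. A k) = {}"
      proof -
        have "y \<notin> (\<Inter>k. A k)" for y :: 'a
          using reals_Archimedean2[of "norm y"] by (auto simp: A_def not_less intro: less_imp_le)
        then show ?thesis by blast
      qed
      with lim have "(\<lambda>k. measure V (A k)) \<longlonglongrightarrow> 0" by simp
      from order_tendstoD(2)[OF this \<delta>(1)] obtain k where "measure V (A k) < \<delta>"
        by (auto simp: eventually_sequentially)
      then show ?thesis using that[of "real k"] by (simp add: A_def)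
    qed
    define gf where "gf t = c * M * ((1 - t*K/\<rho>) powr (-\<beta>) - (1 + t*K/\<rho>) powr (-\<beta>))" for t
    have "(gf \<longlongrightarrow> c * M * ((1 - 0*K/\<rho>) powr (-\<beta>) - (1 + 0*K/\<rho>) powr (-\<beta>))) (at_right 0)"
      unfolding gf_def using rho by (intro tendsto_intros) auto
    then have gf0: "(gf \<longlongrightarrow> 0) (at_right 0)" by simp
    have tK: "((\<lambda>t. t * K) \<longlongrightarrow> 0 * K) (at_right (0::real))" by (intro tendsto_intros)
    have ev: "eventually (\<lambda>t. 0 < t \<and> t * K < \<rho>/2 \<and> gf t < \<eta>) (at_right 0)"
    proof (intro eventually_conj)
      show "eventually (\<lambda>t::real. 0 < t) (at_right 0)" by (simp add: eventually_at_right_less)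
      show "eventually (\<lambda>t. t * K < \<rho>/2) (at_right 0)" using order_tendstoD(2)[OF tK, of "\<rho>/2"] rho by simp
      show "eventually (\<lambda>t. gf t < \<eta>) (at_right 0)" using order_tendstoD(2)[OF gf0 \<eta>] .
    qed
    show ?thesis using ev
    proof (rule eventually_mono)
      fix t assume t: "0 < t \<and> t * K < \<rho>/2 \<and> gf t < \<eta>"
      have t0: "0 < t" and tK2: "t * K < \<rho>/2" and gft: "gf t < \<eta>" using t by auto
      define a where "a = t * K"
      have a: "0 \<le> a" "a \<le> \<rho>/2" using t0 K tK2 by (auto simp: a_def)
      define m where "m = measure V {y. K < norm y}"
      have m: "0 \<le> m" "m \<le> \<delta>" using K by (auto simp: m_def)
      define \<kappa> where "\<kappa> = max (gf t + c * m) 0"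
      have \<kappa>0: "0 \<le> \<kappa>" by (simp add: \<kappa>_def)
      have \<kappa>\<eta>: "\<kappa> \<le> 2 * \<eta>"
      proof -
        have "c * m \<le> c * \<delta>" using m c0 by (simp add: mult_left_mono)
        then show ?thesis using gft \<delta>(2) \<eta> by (simp add: \<kappa>_def)
      qed
      have k1: "c * M * ((1 - a/\<rho>) powr (-\<beta>) - (1 + a/\<rho>) powr (-\<beta>)) + c * m \<le> \<kappa>"
        by (simp add: \<kappa>_def gf_def a_def)
      define Mk where "Mk = measure V {y. norm y \<le> K}"
      have Mk: "M - m \<le> Mk"
      proof -
        have "{y::'a. norm y \<le> K} = space V - {y. K < norm y}" by (auto simp: spV)
        then have "Mk = measure V (space V) - m"
          unfolding Mk_def m_def by (simp add: V.finite_measure_compl V_borel)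
        then show ?thesis by (simp add: M_def spV)
      qed
      have mf: "(\<lambda>y::'a. t *\<^sub>R y) \<in> borel_measurable V"
        by (simp add: measurable_cong_sets[OF V_borel refl])
      have Tm: "{y::'a. K < norm y} \<in> sets V" using V_borel by simp
      define G where "G x = frac_max \<alpha> (\<lambda>z. \<Phi> (norm z)) (dilate_measure t V) x" for x
      have Geq: "G x = (SUP r\<in>{0<..}. enn2ereal (ennreal (1 / r powr \<beta>) *
          (\<integral>\<^sup>+ y. ennreal (\<Phi> (norm (x - t *\<^sub>R y) / r)) \<partial>V)))" for x
        unfolding G_def \<beta>_def by (rule frac_max_eq[OF Phi_decr V_borel t0])
      show "W t \<le> ennreal \<epsilon>"
        unfolding W_def weak_Lp_norm_def pe G_def[symmetric] M_def[symmetric]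
      proof (rule SUP_least)
        fix l :: real assume "l \<in> {0<..}"
        then have l: "0 < l" by simp
        define S where "S = {x \<in> UNIV - ball 0 \<rho>. ereal l < \<bar>G x - (SUP r\<in>{0<..}. ereal (dil_kernel (\<lambda>z. \<Phi> (norm z)) \<alpha> r x)) * ereal M\<bar>}"
        define L' where "L' = l / (2 * \<phi>1 * R0 powr \<beta>)"
        have L': "0 < L'" using l \<phi>1 R0 by (simp add: L'_def)
        obtain U where U: "U \<in> sets lebesgue"
          "{x. \<exists>r>0. ennreal (L' * r powr \<beta>) < emeasure V {y\<in>space V. y \<in> {y. K < norm y} \<and> t *\<^sub>R y \<in> ball x r}} \<subseteq> U"
          "emeasure lebesgue U \<le> ennreal (10^DIM('a) * (m / L') powr p)"
          using maximal_weak[OF V_fin mf Tm L' b] by (auto simp: m_def p_def)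
        define Rl where "Rl = (2 * \<kappa> / l) powr (1/\<beta>)"
        have Rl0: "0 \<le> Rl" by (simp add: Rl_def)
        have sub: "S \<subseteq> ball (0::'a) Rl \<union> U"
        proof
          fix x assume xS: "x \<in> S"
          then have xr: "\<rho> \<le> norm x"
            and big: "ereal l < \<bar>G x - (SUP r\<in>{0<..}. ereal (dil_kernel (\<lambda>z. \<Phi> (norm z)) \<alpha> r x)) * ereal M\<bar>"
            by (auto simp: S_def)
          show "x \<in> ball (0::'a) Rl \<union> U"
          proof (rule ccontr)
            assume "x \<notin> ball (0::'a) Rl \<union> U"
            then have xR: "Rl \<le> norm x" and xU: "x \<notin> U" by auto
            define u where "u = norm x"
            have u0: "0 < u" unfolding u_def using xr rho by linarith
            have xnz: "x \<noteq> 0" using u0 unfolding u_def by (metis norm_zero less_irrefl)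
            have ua: "0 < u - a" using a xr rho by (simp add: u_def)
            have notS: "emeasure V {y\<in>space V. y \<in> {y. K < norm y} \<and> t *\<^sub>R y \<in> ball x r} \<le> ennreal (L' * r powr \<beta>)"
              if r: "0 < r" for r
              using U(2) xU r not_less by blast
            have Gup: "G x \<le> ereal (c * (u - a) powr (-\<beta>) * M + l/2)"
              unfolding Geq
            proof (rule SUP_least)
              fix r :: real assume "r \<in> {0<..}"
              then have r: "0 < r" by simp
              have "(\<integral>\<^sup>+ y. ennreal (\<Phi> (norm (x - t *\<^sub>R y) / r)) \<partial>V) \<le>
                  ennreal (\<Phi> ((norm x - t * K) / r)) * emeasure V UNIV +
                  ennreal \<phi>1 * emeasure V {y\<in>space V. y \<in> {y. K < norm y} \<and> t *\<^sub>R y \<in> ball x (R0 * r)}"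
                using a xr rho by (intro int_upper[where \<Phi>=\<Phi> and V=V and x=x, OF Phi_nonneg Phi_decr R0(2) R0(1) \<phi>1(2) V_borel t0 r K(1)]) (auto simp: a_def)
              also have "\<dots> \<le> ennreal (\<Phi> ((u - a) / r) * M) + ennreal (\<phi>1 * (L' * (R0 * r) powr \<beta>))"
              proof (rule add_mono)
                have "0 \<le> \<Phi> ((u - a) / r)" using ua r by (intro Phi_nonneg) simp
                then show "ennreal (\<Phi> ((norm x - t * K) / r)) * emeasure V UNIV \<le> ennreal (\<Phi> ((u - a) / r) * M)"
                  by (simp add: u_def a_def M_def V.emeasure_eq_measure ennreal_mult)
                have "ennreal \<phi>1 * emeasure V {y\<in>space V. y \<in> {y. K < norm y} \<and> t *\<^sub>R y \<in> ball x (R0 * r)}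
                    \<le> ennreal \<phi>1 * ennreal (L' * (R0 * r) powr \<beta>)"
                  using notS[of "R0 * r"] R0 r by (intro mult_left_mono) auto
                also have "\<dots> = ennreal (\<phi>1 * (L' * (R0 * r) powr \<beta>))"
                  using \<phi>1 L' by (simp add: ennreal_mult)
                finally show "ennreal \<phi>1 * emeasure V {y\<in>space V. y \<in> {y. K < norm y} \<and> t *\<^sub>R y \<in> ball x (R0 * r)}
                    \<le> ennreal (\<phi>1 * (L' * (R0 * r) powr \<beta>))" .
              qed
              also have "\<dots> = ennreal (\<Phi> ((u - a) / r) * M + \<phi>1 * (L' * (R0 * r) powr \<beta>))"
                using ua r M0 \<phi>1 L' Phi_nonneg[of "(u - a) / r"] by (simp add: ennreal_plus)
              finally have I: "(\<integral>\<^sup>+ y. ennreal (\<Phi> (norm (x - t *\<^sub>R y) / r)) \<partial>V) \<le>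
                  ennreal (\<Phi> ((u - a) / r) * M + \<phi>1 * (L' * (R0 * r) powr \<beta>))" .
              have Pn: "0 \<le> \<Phi> ((u - a) / r)" using ua r by (intro Phi_nonneg) simp
              have "ennreal (1 / r powr \<beta>) * (\<integral>\<^sup>+ y. ennreal (\<Phi> (norm (x - t *\<^sub>R y) / r)) \<partial>V) \<le>
                  ennreal (1 / r powr \<beta>) * ennreal (\<Phi> ((u - a) / r) * M + \<phi>1 * (L' * (R0 * r) powr \<beta>))"
                by (rule mult_left_mono[OF I]) simp
              also have "\<dots> = ennreal (1 / r powr \<beta> * (\<Phi> ((u - a) / r) * M + \<phi>1 * (L' * (R0 * r) powr \<beta>)))"
                using Pn M0 \<phi>1 L' r R0 by (intro ennreal_mult[symmetric]) (auto intro!: add_nonneg_nonneg mult_nonneg_nonneg)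
              also have "1 / r powr \<beta> * (\<Phi> ((u - a) / r) * M + \<phi>1 * (L' * (R0 * r) powr \<beta>)) =
                  r powr (-\<beta>) * \<Phi> ((u - a) / r) * M + l/2"
              proof -
                have "\<phi>1 * (L' * (R0 * r) powr \<beta>) = l/2 * r powr \<beta>"
                  using \<phi>1 R0 r l by (simp add: L'_def powr_mult field_simps)
                then show ?thesis using r by (simp add: powr_minus field_simps)
              qed
              also have "r powr (-\<beta>) * \<Phi> ((u - a) / r) * M + l/2 \<le> c * (u - a) powr (-\<beta>) * M + l/2"
              proof -
                have "r powr (-\<beta>) * \<Phi> ((u - a) / r) = (u - a) powr (-\<beta>) * (((u - a) / r) powr \<beta> * \<Phi> ((u - a) / r))"
                  by (rule rescale[OF ua r])
                also have "\<dots> \<le> (u - a) powr (-\<beta>) * c"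
                  using cle[of "(u - a) / r"] ua r by (intro mult_left_mono) auto
                finally show ?thesis using M0 by (simp add: mult_left_mono mult.commute)
              qed
              finally have "ennreal (1 / r powr \<beta>) * (\<integral>\<^sup>+ y. ennreal (\<Phi> (norm (x - t *\<^sub>R y) / r)) \<partial>V)
                  \<le> ennreal (c * (u - a) powr (-\<beta>) * M + l/2)" by (simp add: ennreal_leI)
              then have "enn2ereal (ennreal (1 / r powr \<beta>) * (\<integral>\<^sup>+ y. ennreal (\<Phi> (norm (x - t *\<^sub>R y) / r)) \<partial>V))
                  \<le> enn2ereal (ennreal (c * (u - a) powr (-\<beta>) * M + l/2))"
                by (simp add: less_eq_ennreal.rep_eq)
              also have "\<dots> = ereal (c * (u - a) powr (-\<beta>) * M + l/2)"
                using c0 M0 l by (intro enn2ereal_ennreal) (auto intro!: add_nonneg_nonneg mult_nonneg_nonneg)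
              finally show "enn2ereal (ennreal (1 / r powr \<beta>) * (\<integral>\<^sup>+ y. ennreal (\<Phi> (norm (x - t *\<^sub>R y) / r)) \<partial>V))
                  \<le> ereal (c * (u - a) powr (-\<beta>) * M + l/2)" .
            qed
            have Mk0: "0 \<le> Mk" by (simp add: Mk_def)
            have Glow: "ereal (c * (u + a) powr (-\<beta>) * Mk) \<le> G x"
              unfolding c_def
            proof (rule Psi_lower[where \<Phi>=\<Phi> and \<beta>=\<beta> and k=Mk, OF Phi_nonneg Phi_decr R0 b(1) _ Mk0])
              show "0 < u + a" using u0 a by simp
              fix r :: real assume r: "0 < r"
              have "ennreal (\<Phi> ((norm x + t * K) / r)) * emeasure V {y. norm y \<le> K} \<le>
                  (\<integral>\<^sup>+ y. ennreal (\<Phi> (norm (x - t *\<^sub>R y) / r)) \<partial>V)"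
                by (rule int_lower[where \<Phi>=\<Phi> and V=V and x=x, OF Phi_nonneg Phi_decr V_borel t0 r K(1)])
              then have "ennreal (1 / r powr \<beta>) * (ennreal (\<Phi> ((u + a) / r)) * ennreal Mk) \<le>
                  ennreal (1 / r powr \<beta>) * (\<integral>\<^sup>+ y. ennreal (\<Phi> (norm (x - t *\<^sub>R y) / r)) \<partial>V)"
                by (intro mult_left_mono) (auto simp: u_def a_def Mk_def V.emeasure_eq_measure)
              moreover have "ennreal (1 / r powr \<beta>) * (ennreal (\<Phi> ((u + a) / r)) * ennreal Mk) =
                  ennreal (r powr (-\<beta>) * \<Phi> ((u + a) / r) * Mk)"
              proof -
                have Pn': "0 \<le> \<Phi> ((u + a) / r)" using r u0 a by (intro Phi_nonneg) simp
                have e1: "ennreal (\<Phi> ((u + a) / r)) * ennreal Mk = ennreal (\<Phi> ((u + a) / r) * Mk)"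
                  by (rule ennreal_mult[symmetric]) (use Pn' Mk0 in auto)
                have e2: "ennreal (1 / r powr \<beta>) * ennreal (\<Phi> ((u + a) / r) * Mk) = ennreal (1 / r powr \<beta> * (\<Phi> ((u + a) / r) * Mk))"
                  by (rule ennreal_mult[symmetric]) (use Pn' Mk0 in auto)
                have e3: "1 / r powr \<beta> * (\<Phi> ((u + a) / r) * Mk) = r powr (-\<beta>) * \<Phi> ((u + a) / r) * Mk"
                  by (simp add: powr_minus divide_inverse)
                show ?thesis by (simp only: e1 e2 e3)
              qed
              ultimately have "ennreal (r powr (-\<beta>) * \<Phi> ((u + a) / r) * Mk) \<le>
                  ennreal (1 / r powr \<beta>) * (\<integral>\<^sup>+ y. ennreal (\<Phi> (norm (x - t *\<^sub>R y) / r)) \<partial>V)" by simp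
              then have "enn2ereal (ennreal (r powr (-\<beta>) * \<Phi> ((u + a) / r) * Mk)) \<le>
                  enn2ereal (ennreal (1 / r powr \<beta>) * (\<integral>\<^sup>+ y. ennreal (\<Phi> (norm (x - t *\<^sub>R y) / r)) \<partial>V))"
                by (simp add: less_eq_ennreal.rep_eq)
              also have "\<dots> \<le> G x" unfolding Geq using r by (intro SUP_upper) simp
              finally show "ereal (r powr (-\<beta>) * \<Phi> ((u + a) / r) * Mk) \<le> G x"
                using r Mk0 Phi_nonneg[of "(u + a) / r"] u0 a by (simp add: enn2ereal_ennreal)
            qed
            have k2: "\<kappa> * u powr (-\<beta>) \<le> l/2"
            proof -
              have "(2 * \<kappa> / l) powr (1/\<beta>) \<le> u" using xR by (simp add: Rl_def u_def)
              then have "((2 * \<kappa> / l) powr (1/\<beta>)) powr \<beta> \<le> u powr \<beta>"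
                using b \<kappa>0 l by (intro powr_mono2) auto
              then have "2 * \<kappa> / l \<le> u powr \<beta>" using b \<kappa>0 l by (simp add: powr_powr)
              then have "\<kappa> \<le> l/2 * u powr \<beta>" using l by (simp add: field_simps)
              then show ?thesis using u0 by (simp add: powr_minus field_simps)
            qed
            have ineq: "c * (u - a) powr (-\<beta>) * M - c * u powr (-\<beta>) * M \<le> l/2"
                "c * u powr (-\<beta>) * M - c * (u + a) powr (-\<beta>) * Mk \<le> l/2"
              using real_ineqs[OF b(1) rho _ a c0 M0 m(1) Mk k1 k2] xr by (auto simp: u_def)
            have FM: "(SUP r\<in>{0<..}. ereal (dil_kernel (\<lambda>z. \<Phi> (norm z)) \<alpha> r x)) * ereal M = ereal (c * u powr (-\<beta>) * M)"
              using Feq[OF xnz] by (simp add: u_def)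
            show False
              using ereal_abs_contra[OF Gup Glow ineq] big FM by simp
          qed
        qed
        have real: "(2*Rl)^DIM('a) + 10^DIM('a) * (m/L') powr p \<le> \<epsilon> powr p / l powr p"
        proof -
          have "Rl ^ DIM('a) = Rl powr real DIM('a)" using Rl0 by (simp add: powr_realpow')
          also have "\<dots> = (2 * \<kappa> / l) powr p"
            using b by (simp add: Rl_def powr_powr p_def)
          also have "\<dots> = (2 * \<kappa>) powr p / l powr p"
            using \<kappa>0 l by (simp add: powr_divide)
          finally have Rlp: "Rl ^ DIM('a) = (2 * \<kappa>) powr p / l powr p" .
          have Rln: "(2*Rl)^DIM('a) = 2^DIM('a) * ((2 * \<kappa>) powr p / l powr p)"
            by (simp only: power_mult_distrib Rlp)
          have "m / L' = (2 * \<phi>1 * R0 powr \<beta> * m) / l" using l \<phi>1 R0 by (simp add: L'_def field_simps)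
          then have mL: "(m/L') powr p = (2 * \<phi>1 * R0 powr \<beta> * m) powr p / l powr p"
            using m \<phi>1 l by (simp add: powr_divide)
          have i1: "(2 * \<kappa>) powr p \<le> 4 powr p * \<eta> powr p"
          proof -
            have "(2 * \<kappa>) powr p \<le> (4 * \<eta>) powr p" using \<kappa>0 \<kappa>\<eta> p0 by (intro powr_mono2) auto
            then show ?thesis using \<eta> by (simp add: powr_mult)
          qed
          have i2: "(2 * \<phi>1 * R0 powr \<beta> * m) powr p \<le> 2 powr p * \<eta> powr p"
          proof -
            have "\<phi>1 * R0 powr \<beta> * m \<le> \<phi>1 * R0 powr \<beta> * \<delta>"
              using m \<phi>1 by (intro mult_left_mono) auto
            then have "2 * \<phi>1 * R0 powr \<beta> * m \<le> 2 * \<eta>" using \<delta>(3) by simp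
            then have "(2 * \<phi>1 * R0 powr \<beta> * m) powr p \<le> (2 * \<eta>) powr p"
              using m \<phi>1 p0 by (intro powr_mono2) auto
            then show ?thesis using \<eta> by (simp add: powr_mult)
          qed
          have lp: "0 < l powr p" using l by simp
          have "(2*Rl)^DIM('a) + 10^DIM('a) * (m/L') powr p =
              (2^DIM('a) * (2 * \<kappa>) powr p + 10^DIM('a) * (2 * \<phi>1 * R0 powr \<beta> * m) powr p) / l powr p"
            by (simp add: Rlp mL power_mult_distrib add_divide_distrib)
          also have "\<dots> \<le> (2^DIM('a) * (4 powr p * \<eta> powr p) + 10^DIM('a) * (2 powr p * \<eta> powr p)) / l powr p"
            using lp i1 i2 by (intro divide_right_mono add_mono mult_left_mono) auto
          also have "2^DIM('a) * (4 powr p * \<eta> powr p) + 10^DIM('a) * (2 powr p * \<eta> powr p) = A0 * \<eta> powr p"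
            by (simp add: A0_def algebra_simps)
          finally show ?thesis using \<eta>p by simp
        qed
        have meas: "emeasure lebesgue S \<le> ennreal (\<epsilon> powr p / l powr p)"
        proof -
          have "emeasure lebesgue S \<le> emeasure lebesgue (ball (0::'a) Rl \<union> U)"
            by (rule emeasure_mono[OF sub]) (use U(1) in auto)
          also have "\<dots> \<le> emeasure lebesgue (ball (0::'a) Rl) + emeasure lebesgue U"
            using emeasure_subadditive[of "ball (0::'a) Rl" lebesgue U] U(1) by simp
          also have "\<dots> \<le> ennreal ((2*Rl)^DIM('a)) + ennreal (10^DIM('a) * (m / L') powr p)"
            by (intro add_mono lebesgue_ball_le U(3) Rl0)
          also have "\<dots> = ennreal ((2*Rl)^DIM('a) + 10^DIM('a) * (m / L') powr p)"
            using Rl0 by (simp add: ennreal_plus)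
          also have "\<dots> \<le> ennreal (\<epsilon> powr p / l powr p)" by (rule ennreal_leI[OF real])
          finally show ?thesis .
        qed
        have fin: "emeasure lebesgue S \<noteq> top" using meas by (metis ennreal_neq_top neq_top_trans)
        have "enn2real (emeasure lebesgue S) \<le> \<epsilon> powr p / l powr p"
          using meas by (metis enn2real_ennreal enn2real_mono ennreal_neq_top less_top zero_le_divide_iff powr_ge_zero)
        then have "enn2real (emeasure lebesgue S) powr (1/p) \<le> (\<epsilon> powr p / l powr p) powr (1/p)"
          using p0 by (intro powr_mono2) auto
        also have "(\<epsilon> powr p / l powr p) powr (1/p) = \<epsilon> / l"
          using \<epsilon> l p0 by (simp add: powr_divide powr_powr)
        finally have pw: "enn_powr (emeasure lebesgue S) (1/p) \<le> ennreal (\<epsilon> / l)"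
          using fin by (simp add: enn_powr_def ennreal_leI)
        have "ennreal l * enn_powr (emeasure lebesgue S) (1/p) \<le> ennreal l * ennreal (\<epsilon> / l)"
          by (rule mult_left_mono[OF pw]) simp
        also have "\<dots> = ennreal \<epsilon>" using l \<epsilon> by (subst ennreal_mult[symmetric]) auto
        finally show "ennreal l * enn_powr (emeasure lebesgue {x \<in> UNIV - ball 0 \<rho>. \<bar>G x - (SUP r\<in>{0<..}. ereal (dil_kernel (\<lambda>z. \<Phi> (norm z)) \<alpha> r x)) * ereal M\<bar> > ereal l}) (1/p) \<le> ennreal \<epsilon>"
          by (simp add: S_def)
      qed
    qed
  qed
  show ?thesis
    unfolding W_def[symmetric]
  proof (rule order_tendstoI)
    fix y :: ennreal assume "y < 0" then show "eventually (\<lambda>t. y < W t) (at_right 0)" by simp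
  next
    fix y :: ennreal assume y: "0 < y"
    obtain z where z: "0 < z" "z < y" using dense[OF y] by blast
    then have zf: "z < top" using top.not_eq_extremum by fastforce
    define e where "e = enn2real z"
    have e: "0 < e" "ennreal e = z" using z zf by (auto simp: e_def enn2real_positive_iff less_top)
    show "eventually (\<lambda>t. W t < y) (at_right 0)"
      using main[OF e(1)] by eventually_elim (use e z in auto)
  qed
qed

end
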